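(* Fix a timestep $T$ and consider two spiking neurons $\hat\sigma^T$ and $\tilde\sigma^T$ (same threshold $u_{th}$) with the same temporal input $\tilde h^{T-1}=\hat h^{T-1}$ and spatial input features $\hat x^T,\tilde x^T$. Suppose $\hat u^T=\hat h^{T-1}+\hat x^T$ is a random variable whose distribution is a $u_{th}$-Neighborhood-Finite Distribution, and suppose $|\tilde x^T-\hat x^T|\le\epsilon$. Then the probability that the two neurons produce different outputs, $P[\hat\sigma^T(\hat x^T)\neq\tilde\sigma^T(\tilde x^T)]$, has an upper bound proportional to $\epsilon$ (i.e. it is at most a constant multiple of $\epsilon$, the constant depending only on the distribution of $\hat u^T$).
   Context: A Leaky Integrate-and-Fire (LIF) spiking neuron with firing threshold $u_{th}$, reset potential $V_{reset}$ and decay factor $\beta\in(0,1)$ receives spatial input features $x^1,x^2,\dots$ and evolves by $u^t=h^{t-1}+x^t$, $s^t=\mathrm{Hea}(u^t-u_{th})$, $h^t=V_{reset}s^t+\beta u^t(1-s^t)$, where $\mathrm{Hea}(y)=1$ if $y\ge 0$ and $0$ otherwise; $u^t$ is the membrane potential, $h^{t-1}$ the temporal input, and the output at timestep $t$ is written $\sigma^t(x^t)=s^t$. A probability density $p$ is an $m$-Neighborhood-Finite Distribution if there exists $\epsilon>0$ with $\sup_{x\in[m-\epsilon,m+\epsilon]}p(x)<+\infty$; a random variable follows such a distribution if its density does. *)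

theory Defs
  imports "HOL-Probability.Probability"
begin

definition Hea :: "real \<Rightarrow> real" where
  "Hea y = (if y \<ge> 0 then 1 else 0)"

text \<open>Output spike of a LIF neuron at timestep T with threshold u_th, given
  temporal input h (= h^{T-1}) and spatial input x (= x^T):
  u^T = h + x, s^T = Hea(u^T - u_th).\<close>
definition spike_out :: "real \<Rightarrow> real \<Rightarrow> real \<Rightarrow> real" where
  "spike_out uth h x = Hea (h + x - uth)"

definition nfd :: "real \<Rightarrow> (real \<Rightarrow> ennreal) \<Rightarrow> bool" where
  "nfd m p \<longleftrightarrow> (\<exists>e>0. (SUP x\<in>{m - e..m + e}. p x) < \<infinity>)"

end

theory Submission
  imports Defs
begin

theorem lemma2:
  fixes M :: "'a measure" and uth :: real and p :: "real \<Rightarrow> ennreal"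
  assumes "prob_space M"
    and "nfd uth p"
  shows "\<exists>C\<ge>0. \<forall>(h :: 'a \<Rightarrow> real) xhat xtilde (\<epsilon> :: real).
           h \<in> borel_measurable M \<longrightarrow> xhat \<in> borel_measurable M \<longrightarrow>
           xtilde \<in> borel_measurable M \<longrightarrow>
           distributed M lborel (\<lambda>\<omega>. h \<omega> + xhat \<omega>) p \<longrightarrow>
           (\<forall>\<omega>\<in>space M. \<bar>xtilde \<omega> - xhat \<omega>\<bar> \<le> \<epsilon>) \<longrightarrow>
           measure M {\<omega>\<in>space M. spike_out uth (h \<omega>) (xhat \<omega>) \<noteq> spike_out uth (h \<omega>) (xtilde \<omega>)}
             \<le> C * \<epsilon>"
proof -
  interpret P: prob_space M by fact
  obtain e where e: "e > 0" and S: "(SUP x\<in>{uth - e..uth + e}. p x) < \<infinity>"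
    using assms(2) unfolding nfd_def by blast
  define B where "B = enn2real (SUP x\<in>{uth - e..uth + e}. p x)"
  have B0: "B \<ge> 0" unfolding B_def by simp
  have pB: "p x \<le> ennreal B" if "x \<in> {uth - e..uth + e}" for x
  proof -
    have "p x \<le> (SUP x\<in>{uth - e..uth + e}. p x)" using that by (rule SUP_upper)
    also have "\<dots> = ennreal B" unfolding B_def using S by (simp add: ennreal_enn2real less_top)
    finally show ?thesis .
  qed
  define C where "C = max (2 * B) (1 / e)"
  have C0: "C \<ge> 0" unfolding C_def using e B0 by (simp add: le_max_iff_disj)
  show ?thesis
  proof (intro exI[of _ C] conjI C0 allI impI)
    fix h xhat xtilde :: "'a \<Rightarrow> real" and \<epsilon> :: real
    assume hm: "h \<in> borel_measurable M" and xm: "xhat \<in> borel_measurable M"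
      and tm: "xtilde \<in> borel_measurable M"
      and D: "distributed M lborel (\<lambda>\<omega>. h \<omega> + xhat \<omega>) p"
      and cl: "\<forall>\<omega>\<in>space M. \<bar>xtilde \<omega> - xhat \<omega>\<bar> \<le> \<epsilon>"
    define E where "E = {\<omega>\<in>space M. spike_out uth (h \<omega>) (xhat \<omega>) \<noteq> spike_out uth (h \<omega>) (xtilde \<omega>)}"
    obtain \<omega>0 where "\<omega>0 \<in> space M" using P.not_empty by blast
    with cl have eps0: "\<epsilon> \<ge> 0" by force
    show "measure M E \<le> C * \<epsilon>"
    proof (cases "\<epsilon> \<ge> e")
      case True
      have "measure M E \<le> 1" by (rule P.prob_le_1)
      also have "1 \<le> \<epsilon> / e" using True e by simp
      also have "\<epsilon> / e \<le> C * \<epsilon>" unfolding C_def using eps0 e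
        by (simp add: divide_inverse mult.commute mult_left_mono)
      finally show ?thesis .
    next
      case False
      define A where "A = {uth - \<epsilon>..uth + \<epsilon>}"
      let ?X = "\<lambda>\<omega>. h \<omega> + xhat \<omega>"
      have sub: "E \<subseteq> ?X -` A \<inter> space M"
      proof
        fix \<omega> assume w: "\<omega> \<in> E"
        then have sp: "\<omega> \<in> space M" unfolding E_def by simp
        have d: "\<bar>xtilde \<omega> - xhat \<omega>\<bar> \<le> \<epsilon>" using cl sp by blast
        from w have "Hea (h \<omega> + xhat \<omega> - uth) \<noteq> Hea (h \<omega> + xtilde \<omega> - uth)"
          unfolding E_def spike_out_def by simp
        then have "(h \<omega> + xhat \<omega> - uth \<ge> 0) \<noteq> (h \<omega> + xtilde \<omega> - uth \<ge> 0)"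
          unfolding Hea_def by (auto split: if_splits)
        with d have "?X \<omega> \<in> A" unfolding A_def by auto
        with sp show "\<omega> \<in> ?X -` A \<inter> space M" by simp
      qed
      have em: "emeasure M (?X -` A \<inter> space M) = (\<integral>\<^sup>+x. p x * indicator A x \<partial>lborel)"
        using D unfolding A_def by (intro distributed_emeasure) auto
      also have "\<dots> \<le> (\<integral>\<^sup>+x. ennreal B * indicator A x \<partial>lborel)"
      proof (intro nn_integral_mono)
        fix x
        show "p x * indicator A x \<le> ennreal B * indicator A x"
        proof (cases "x \<in> A")
          case True
          then have "x \<in> {uth - e..uth + e}" using False unfolding A_def by auto
          with True pB show ?thesis by simp
        qed simp
      qed
      also have "\<dots> = ennreal B * emeasure lborel A"
        unfolding A_def by (intro nn_integral_cmult_indicator) auto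
      also have "\<dots> = ennreal (2 * \<epsilon> * B)"
        unfolding A_def using eps0 B0 by (simp add: ennreal_mult[symmetric] mult.commute)
      finally have le: "emeasure M (?X -` A \<inter> space M) \<le> ennreal (2 * \<epsilon> * B)" .
      have "emeasure M E \<le> emeasure M (?X -` A \<inter> space M)"
        by (rule emeasure_mono[OF sub]) (use D in \<open>auto simp: A_def distributed_def\<close>)
      also note le
      finally have "emeasure M E \<le> ennreal (2 * \<epsilon> * B)" .
      then have "measure M E \<le> 2 * \<epsilon> * B"
        unfolding measure_def using eps0 B0 by (simp add: enn2real_leI)
      also have "\<dots> = \<epsilon> * (2 * B)" by simp
      also have "\<dots> \<le> \<epsilon> * C" unfolding C_def using eps0
        by (intro mult_left_mono) auto
      also have "\<dots> = C * \<epsilon>" by simp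
      finally show ?thesis .
    qed
  qed
qed

end
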